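(* A function $f\colon\prod_{i\in[n]}X_i\to Y$ is a pseudo-polynomial function if and only if it satisfies condition (BC) and $\Phi_k^-\le\Phi_k^+$ (pointwise) for all $k\in[n]$.
   Context: $Y$ is a finite distributive lattice identified with a sublattice of $\mathcal{P}(U)$ for a finite set $U$, with least element $0=\emptyset$, greatest element $1=U$, and $\wedge,\vee$ being intersection and union; $\overline{S}=U\setminus S$. For $S\subseteq U$, $\operatorname{cl}(S)=\bigwedge\{y\in Y: y\ge S\}$, $\operatorname{int}(S)=\bigvee\{y\in Y: y\le S\}$. $[n]=\{1,\ldots,n\}$; $X_1,\ldots,X_n$ are arbitrary sets with at least two elements, each with two fixed distinct elements $0_{X_k},1_{X_k}$ (written $0,1$). For $\mathbf{x}\in\prod_i X_i$ and $a\in X_k$, $\mathbf{x}_k^a$ is $\mathbf{x}$ with $k$-th component replaced by $a$. A map $\varphi_k\colon X_k\to Y$ satisfies the boundary condition if $\varphi_k(0_{X_k})\le\varphi_k(x_k)\le\varphi_k(1_{X_k})$ for all $x_k$. A polynomial function $Y^n\to Y$ is a composition of $\wedge,\vee$ with variables and constants. $f$ is a pseudo-polynomial function if $f(\mathbf{x})=p(\varphi_1(x_1),\ldots,\varphi_n(x_n))$ for some polynomial function $p$ and maps $\varphi_k$ satisfying the boundary condition. Condition (BC): $f(\mathbf{x}_k^0)\le f(\mathbf{x})\le f(\mathbf{x}_k^1)$ for all $k\in[n]$ and all $\mathbf{x}$. For $k\in[n]$, $a_k\in X_k$: $$\Phi_k^-(a_k)=\bigvee_{\mathbf{x}:\,x_k=a_k}\operatorname{cl}\big(f(\mathbf{x})\wedge\overline{f(\mathbf{x}_k^0)}\big),\qquad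 \Phi_k^+(a_k)=\bigwedge_{\mathbf{x}:\,x_k=a_k}\operatorname{int}\big(f(\mathbf{x})\vee\overline{f(\mathbf{x}_k^1)}\big),$$ ranging over all $\mathbf{x}$ with $k$-th component $a_k$. *)

theory Defs
  imports Main "HOL-Library.FuncSet"
begin

text \<open>Y is a finite distributive lattice represented as a sublattice of Pow U
  containing the empty set and U.\<close>
definition set_lattice :: "'u set \<Rightarrow> 'u set set \<Rightarrow> bool" where
  "set_lattice U Y \<longleftrightarrow> finite U \<and> Y \<subseteq> Pow U \<and> {} \<in> Y \<and> U \<in> Y
     \<and> (\<forall>a\<in>Y. \<forall>b\<in>Y. a \<inter> b \<in> Y \<and> a \<union> b \<in> Y)"

definition lcl :: "'u set set \<Rightarrow> 'u set \<Rightarrow> 'u set" where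
  "lcl Y S = \<Inter> {y \<in> Y. S \<subseteq> y}"

definition lint :: "'u set set \<Rightarrow> 'u set \<Rightarrow> 'u set" where
  "lint Y S = \<Union> {y \<in> Y. y \<subseteq> S}"

datatype 'u lterm = LVar nat | LConst "'u set" | LMeet "'u lterm" "'u lterm" | LJoin "'u lterm" "'u lterm"

fun leval :: "'u lterm \<Rightarrow> (nat \<Rightarrow> 'u set) \<Rightarrow> 'u set" where
  "leval (LVar i) v = v i"
| "leval (LConst c) v = c"
| "leval (LMeet s t) v = leval s v \<inter> leval t v"
| "leval (LJoin s t) v = leval s v \<union> leval t v"

fun lterm_ok :: "nat \<Rightarrow> 'u set set \<Rightarrow> 'u lterm \<Rightarrow> bool" where
  "lterm_ok n Y (LVar i) \<longleftrightarrow> i \<in> {1..n}"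
| "lterm_ok n Y (LConst c) \<longleftrightarrow> c \<in> Y"
| "lterm_ok n Y (LMeet s t) \<longleftrightarrow> lterm_ok n Y s \<and> lterm_ok n Y t"
| "lterm_ok n Y (LJoin s t) \<longleftrightarrow> lterm_ok n Y s \<and> lterm_ok n Y t"

definition boundary_cond :: "'u set set \<Rightarrow> 'a set \<Rightarrow> 'a \<Rightarrow> 'a \<Rightarrow> ('a \<Rightarrow> 'u set) \<Rightarrow> bool" where
  "boundary_cond Y Xk z w \<phi> \<longleftrightarrow> (\<forall>x\<in>Xk. \<phi> x \<in> Y) \<and> (\<forall>x\<in>Xk. \<phi> z \<subseteq> \<phi> x \<and> \<phi> x \<subseteq> \<phi> w)"

definition pseudo_polynomial ::
  "nat \<Rightarrow> (nat \<Rightarrow> 'a set) \<Rightarrow> (nat \<Rightarrow> 'a) \<Rightarrow> (nat \<Rightarrow> 'a) \<Rightarrow> 'u set set \<Rightarrow> ((nat \<Rightarrow> 'a) \<Rightarrow> 'u set) \<Rightarrow> bool" where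
  "pseudo_polynomial n X zero one Y f \<longleftrightarrow>
     (\<exists>p \<phi>. lterm_ok n Y p \<and> (\<forall>k\<in>{1..n}. boundary_cond Y (X k) (zero k) (one k) (\<phi> k))
        \<and> (\<forall>x\<in>Pi\<^sub>E {1..n} X. f x = leval p (\<lambda>k. \<phi> k (x k))))"

definition BC ::
  "nat \<Rightarrow> (nat \<Rightarrow> 'a set) \<Rightarrow> (nat \<Rightarrow> 'a) \<Rightarrow> (nat \<Rightarrow> 'a) \<Rightarrow> ((nat \<Rightarrow> 'a) \<Rightarrow> 'u set) \<Rightarrow> bool" where
  "BC n X zero one f \<longleftrightarrow> (\<forall>k\<in>{1..n}. \<forall>x\<in>Pi\<^sub>E {1..n} X.
      f (x(k := zero k)) \<subseteq> f x \<and> f x \<subseteq> f (x(k := one k)))"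

definition Phi_minus ::
  "nat \<Rightarrow> (nat \<Rightarrow> 'a set) \<Rightarrow> (nat \<Rightarrow> 'a) \<Rightarrow> 'u set \<Rightarrow> 'u set set \<Rightarrow> ((nat \<Rightarrow> 'a) \<Rightarrow> 'u set) \<Rightarrow> nat \<Rightarrow> 'a \<Rightarrow> 'u set" where
  "Phi_minus n X zero U Y f k a =
     \<Union> {lcl Y (f x \<inter> (U - f (x(k := zero k)))) | x. x \<in> Pi\<^sub>E {1..n} X \<and> x k = a}"

definition Phi_plus ::
  "nat \<Rightarrow> (nat \<Rightarrow> 'a set) \<Rightarrow> (nat \<Rightarrow> 'a) \<Rightarrow> 'u set \<Rightarrow> 'u set set \<Rightarrow> ((nat \<Rightarrow> 'a) \<Rightarrow> 'u set) \<Rightarrow> nat \<Rightarrow> 'a \<Rightarrow> 'u set" where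
  "Phi_plus n X one U Y f k a =
     U \<inter> \<Inter> {lint Y (f x \<union> (U - f (x(k := one k)))) | x. x \<in> Pi\<^sub>E {1..n} X \<and> x k = a}"

end

theory Submission
  imports Defs
begin

lemma upd_PiE: "k \<in> S \<Longrightarrow> c \<in> T k \<Longrightarrow> x \<in> Pi\<^sub>E S T \<Longrightarrow> x(k := c) \<in> Pi\<^sub>E S T"
  using PiE_fun_upd[of c T k x S] by (simp add: insert_absorb)

lemma leval_mono: "(\<forall>i. v i \<subseteq> w i) \<Longrightarrow> leval p v \<subseteq> leval p w"
  by (induction p) auto

lemma leval_up: "leval p (v(k:=t)) \<subseteq> leval p (v(k:=c)) \<union> t"
  by (induction p) auto

lemma leval_down: "t \<inter> leval p (v(k:=d)) \<subseteq> leval p (v(k:=t))"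
  by (induction p) auto

lemma SL_finite: "set_lattice U Y \<Longrightarrow> finite Y"
  unfolding set_lattice_def by (meson finite_Pow_iff finite_subset)

lemma SL_Union: assumes "set_lattice U Y" "A \<subseteq> Y" shows "\<Union>A \<in> Y"
proof -
  have "finite A" using SL_finite[OF assms(1)] assms(2) finite_subset by blast
  then show ?thesis using assms(2)
  proof (induction A rule: finite_induct)
    case empty then show ?case using assms(1) by (simp add: set_lattice_def)
  next
    case (insert a A) then show ?case using assms(1) unfolding set_lattice_def by auto
  qed
qed

lemma SL_Inter: assumes "set_lattice U Y" "A \<subseteq> Y" shows "U \<inter> \<Inter>A \<in> Y"
proof -
  have "finite A" using SL_finite[OF assms(1)] assms(2) finite_subset by blast
  then show ?thesis using assms(2)
  proof (induction A rule: finite_induct)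
    case empty then show ?case using assms(1) by (simp add: set_lattice_def)
  next
    case (insert a A)
    have "U \<inter> \<Inter>(insert a A) = a \<inter> (U \<inter> \<Inter>A)" by auto
    then show ?case using insert assms(1) unfolding set_lattice_def by auto
  qed
qed

lemma lcl_in: assumes "set_lattice U Y" "S \<subseteq> U" shows "lcl Y S \<in> Y"
proof -
  have "U \<in> {y \<in> Y. S \<subseteq> y}" using assms by (simp add: set_lattice_def)
  then have "lcl Y S = U \<inter> \<Inter>{y \<in> Y. S \<subseteq> y}" unfolding lcl_def by auto
  then show ?thesis using SL_Inter[OF assms(1), of "{y \<in> Y. S \<subseteq> y}"] by auto
qed

lemma lcl_ge: "S \<subseteq> lcl Y S" unfolding lcl_def by auto
lemma lcl_least: "y \<in> Y \<Longrightarrow> S \<subseteq> y \<Longrightarrow> lcl Y S \<subseteq> y" unfolding lcl_def by auto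
lemma lcl_mono: "S \<subseteq> T \<Longrightarrow> lcl Y S \<subseteq> lcl Y T" unfolding lcl_def by auto
lemma lint_le: "lint Y S \<subseteq> S" unfolding lint_def by auto
lemma lint_greatest: "y \<in> Y \<Longrightarrow> y \<subseteq> S \<Longrightarrow> y \<subseteq> lint Y S" unfolding lint_def by auto

fun build :: "((nat\<Rightarrow>'a) \<Rightarrow> 'u set) \<Rightarrow> (nat\<Rightarrow>'a) \<Rightarrow> (nat\<Rightarrow>'a) \<Rightarrow> nat \<Rightarrow> (nat\<Rightarrow>'a) \<Rightarrow> 'u lterm" where
  "build f zz oo 0 e = LConst (f e)"
| "build f zz oo (Suc m) e = LJoin (build f zz oo m (e(Suc m := zz (Suc m))))
      (LMeet (build f zz oo m (e(Suc m := oo (Suc m)))) (LVar (Suc m)))"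

lemma build_cong: "(\<forall>i. i \<notin> {1..m} \<longrightarrow> e i = e' i) \<Longrightarrow> build f zz oo m e = build f zz oo m e'"
proof (induction m arbitrary: e e')
  case 0 then have "e = e'" by auto
  then show ?case by simp
next
  case (Suc m)
  have a: "build f zz oo m (e(Suc m := c)) = build f zz oo m (e'(Suc m := c))" for c
    using Suc.prems by (intro Suc.IH) auto
  show ?case by (simp add: a)
qed

lemma build_ok:
  assumes "\<forall>k\<in>{1..n}. zero k \<in> X k \<and> one k \<in> X k"
    and "\<forall>x\<in>Pi\<^sub>E {1..n} X. f x \<in> Y"
  shows "m \<le> n \<Longrightarrow> e \<in> Pi\<^sub>E {1..n} X \<Longrightarrow> lterm_ok n Y (build f zero one m e)"
proof (induction m arbitrary: e)
  case 0 then show ?case using assms by simp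
next
  case (Suc m)
  have k: "Suc m \<in> {1..n}" using Suc.prems by auto
  have "e(Suc m := zero (Suc m)) \<in> Pi\<^sub>E {1..n} X" "e(Suc m := one (Suc m)) \<in> Pi\<^sub>E {1..n} X"
    using upd_PiE[OF k] assms(1) k Suc.prems by auto
  then show ?case using Suc k by simp
qed

lemma build_eval:
  assumes "\<forall>k\<in>{1..n}. zero k \<in> X k \<and> one k \<in> X k"
    and D: "\<forall>k\<in>{1..n}. \<forall>e\<in>Pi\<^sub>E {1..n} X. f e = f (e(k := zero k)) \<union> (f (e(k := one k)) \<inter> \<phi> k (e k))"
  shows "m \<le> n \<Longrightarrow> e \<in> Pi\<^sub>E {1..n} X \<Longrightarrow> (\<forall>i\<in>{1..m}. v i = \<phi> i (e i))
     \<Longrightarrow> leval (build f zero one m e) v = f e"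
proof (induction m arbitrary: e)
  case 0 then show ?case by simp
next
  case (Suc m)
  have k: "Suc m \<in> {1..n}" using Suc.prems by auto
  have e0: "e(Suc m := zero (Suc m)) \<in> Pi\<^sub>E {1..n} X" and e1: "e(Suc m := one (Suc m)) \<in> Pi\<^sub>E {1..n} X"
    using upd_PiE[OF k] assms(1) k Suc.prems by auto
  have "leval (build f zero one m (e(Suc m := zero (Suc m)))) v = f (e(Suc m := zero (Suc m)))"
    using Suc e0 by (intro Suc.IH) auto
  moreover have "leval (build f zero one m (e(Suc m := one (Suc m)))) v = f (e(Suc m := one (Suc m)))"
    using Suc e1 by (intro Suc.IH) auto
  moreover have "v (Suc m) = \<phi> (Suc m) (e (Suc m))" using Suc.prems by auto
  moreover have "f e = f (e(Suc m := zero (Suc m))) \<union> (f (e(Suc m := one (Suc m))) \<inter> \<phi> (Suc m) (e (Suc m)))"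
    using D k Suc.prems(2) by blast
  ultimately show ?case by simp
qed

theorem mainTheorem6:
  fixes n :: nat and X :: "nat \<Rightarrow> 'a set" and zero one :: "nat \<Rightarrow> 'a"
    and U :: "'u set" and Y :: "'u set set" and f :: "(nat \<Rightarrow> 'a) \<Rightarrow> 'u set"
  assumes "set_lattice U Y"
    and "\<forall>k\<in>{1..n}. zero k \<in> X k \<and> one k \<in> X k \<and> zero k \<noteq> one k"
    and "\<forall>x\<in>Pi\<^sub>E {1..n} X. f x \<in> Y"
  shows "pseudo_polynomial n X zero one Y f \<longleftrightarrow>
    (BC n X zero one f \<and>
     (\<forall>k\<in>{1..n}. \<forall>a\<in>X k. Phi_minus n X zero U Y f k a \<subseteq> Phi_plus n X one U Y f k a))"
proof
  assume "pseudo_polynomial n X zero one Y f"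
  then obtain p \<phi> where bc: "\<forall>k\<in>{1..n}. boundary_cond Y (X k) (zero k) (one k) (\<phi> k)"
    and feq: "\<forall>x\<in>Pi\<^sub>E {1..n} X. f x = leval p (\<lambda>k. \<phi> k (x k))"
    unfolding pseudo_polynomial_def by blast
  have YU: "\<And>y. y \<in> Y \<Longrightarrow> y \<subseteq> U" using assms(1) by (auto simp: set_lattice_def)
  have upd: "f (x(k := c)) = leval p ((\<lambda>i. \<phi> i (x i))(k := \<phi> k c))"
    if "k \<in> {1..n}" "x \<in> Pi\<^sub>E {1..n} X" "c \<in> X k" for k x c
  proof -
    have "(\<lambda>i. \<phi> i ((x(k := c)) i)) = (\<lambda>i. \<phi> i (x i))(k := \<phi> k c)" by (rule ext) simp
    then show ?thesis using feq upd_PiE[OF that(1,3,2)] by metis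
  qed
  have self: "f x = leval p ((\<lambda>i. \<phi> i (x i))(k := \<phi> k (x k)))"
    if "x \<in> Pi\<^sub>E {1..n} X" for k x
    using feq that by (simp add: fun_upd_idem)
  have "BC n X zero one f"
    unfolding BC_def
  proof (intro ballI conjI)
    fix k x assume k: "k \<in> {1..n}" and x: "x \<in> Pi\<^sub>E {1..n} X"
    have xk: "x k \<in> X k" using k x by auto
    have b: "\<phi> k (zero k) \<subseteq> \<phi> k (x k)" "\<phi> k (x k) \<subseteq> \<phi> k (one k)"
      using bc k xk unfolding boundary_cond_def by auto
    show "f (x(k := zero k)) \<subseteq> f x"
      unfolding upd[OF k x assms(2)[rule_format, OF k, THEN conjunct1]] self[OF x, of k]
      by (rule leval_mono) (use b in auto)
    show "f x \<subseteq> f (x(k := one k))"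
      unfolding upd[OF k x assms(2)[rule_format, OF k, THEN conjunct2, THEN conjunct1]] self[OF x, of k]
      by (rule leval_mono) (use b in auto)
  qed
  moreover have "Phi_minus n X zero U Y f k a \<subseteq> Phi_plus n X one U Y f k a"
    if k: "k \<in> {1..n}" and a: "a \<in> X k" for k a
  proof -
    have inY: "\<phi> k a \<in> Y" using bc k a unfolding boundary_cond_def by auto
    have z: "zero k \<in> X k" and o: "one k \<in> X k" using assms(2) k by auto
    have "Phi_minus n X zero U Y f k a \<subseteq> \<phi> k a"
      unfolding Phi_minus_def
    proof (rule Union_least)
      fix S assume "S \<in> {lcl Y (f x \<inter> (U - f (x(k := zero k)))) |x. x \<in> Pi\<^sub>E {1..n} X \<and> x k = a}"
      then obtain x where x: "x \<in> Pi\<^sub>E {1..n} X" and xa: "x k = a"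
        and S: "S = lcl Y (f x \<inter> (U - f (x(k := zero k))))" by blast
      have "f x \<subseteq> f (x(k := zero k)) \<union> \<phi> k a"
        unfolding upd[OF k x z] self[OF x, of k] using xa leval_up by metis
      then show "S \<subseteq> \<phi> k a"
        unfolding S by (intro lcl_least) (use inY in auto)
    qed
    also have "\<phi> k a \<subseteq> Phi_plus n X one U Y f k a"
      unfolding Phi_plus_def
    proof (intro Int_greatest Inter_greatest)
      show "\<phi> k a \<subseteq> U" using YU inY .
      fix S assume "S \<in> {lint Y (f x \<union> (U - f (x(k := one k)))) |x. x \<in> Pi\<^sub>E {1..n} X \<and> x k = a}"
      then obtain x where x: "x \<in> Pi\<^sub>E {1..n} X" and xa: "x k = a"
        and S: "S = lint Y (f x \<union> (U - f (x(k := one k))))" by blast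
      have "\<phi> k a \<inter> f (x(k := one k)) \<subseteq> f x"
        unfolding upd[OF k x o] self[OF x, of k] using xa leval_down by metis
      then have "\<phi> k a \<subseteq> f x \<union> (U - f (x(k := one k)))" using YU[OF inY] by blast
      then show "\<phi> k a \<subseteq> S" unfolding S by (rule lint_greatest[OF inY])
    qed
    finally show ?thesis .
  qed
  ultimately show "BC n X zero one f \<and>
     (\<forall>k\<in>{1..n}. \<forall>a\<in>X k. Phi_minus n X zero U Y f k a \<subseteq> Phi_plus n X one U Y f k a)" by blast
next
  assume R: "BC n X zero one f \<and>
     (\<forall>k\<in>{1..n}. \<forall>a\<in>X k. Phi_minus n X zero U Y f k a \<subseteq> Phi_plus n X one U Y f k a)"
  have bcf: "f (x(k := zero k)) \<subseteq> f x" "f x \<subseteq> f (x(k := one k))"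
    if "k \<in> {1..n}" "x \<in> Pi\<^sub>E {1..n} X" for k x
    using R that unfolding BC_def by auto
  have YU: "\<And>y. y \<in> Y \<Longrightarrow> y \<subseteq> U" using assms(1) by (auto simp: set_lattice_def)
  define \<phi> where "\<phi> = Phi_minus n X zero U Y f"
  have PE: "x(k := c) \<in> Pi\<^sub>E {1..n} X" if "k \<in> {1..n}" "x \<in> Pi\<^sub>E {1..n} X" "c \<in> X k" for k x c
    using upd_PiE that by metis
  have z: "zero k \<in> X k" and o: "one k \<in> X k" if "k \<in> {1..n}" for k using assms(2) that by auto
  have D: "\<forall>k\<in>{1..n}. \<forall>e\<in>Pi\<^sub>E {1..n} X. f e = f (e(k := zero k)) \<union> (f (e(k := one k)) \<inter> \<phi> k (e k))"
  proof (intro ballI equalityI)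
    fix k e assume k: "k \<in> {1..n}" and e: "e \<in> Pi\<^sub>E {1..n} X"
    have ek: "e k \<in> X k" using k e by auto
    have fe: "f e \<subseteq> U" using YU assms(3) e by blast
    have m: "lcl Y (f e \<inter> (U - f (e(k := zero k)))) \<subseteq> \<phi> k (e k)"
      unfolding \<phi>_def Phi_minus_def using e by blast
    show "f e \<subseteq> f (e(k := zero k)) \<union> (f (e(k := one k)) \<inter> \<phi> k (e k))"
      using bcf[OF k e] m lcl_ge[of "f e \<inter> (U - f (e(k := zero k)))" Y] fe by blast
    have "\<phi> k (e k) \<subseteq> Phi_plus n X one U Y f k (e k)" unfolding \<phi>_def using R k ek by blast
    also have "\<dots> \<subseteq> lint Y (f e \<union> (U - f (e(k := one k))))"
      unfolding Phi_plus_def using e by blast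
    also have "\<dots> \<subseteq> f e \<union> (U - f (e(k := one k)))" by (rule lint_le)
    finally show "f (e(k := zero k)) \<union> (f (e(k := one k)) \<inter> \<phi> k (e k)) \<subseteq> f e"
      using bcf[OF k e] by blast
  qed
  have bnd: "boundary_cond Y (X k) (zero k) (one k) (\<phi> k)" if k: "k \<in> {1..n}" for k
    unfolding boundary_cond_def
  proof (intro conjI ballI)
    fix a assume a: "a \<in> X k"
    show "\<phi> k a \<in> Y" unfolding \<phi>_def Phi_minus_def
    proof (rule SL_Union[OF assms(1)], clarify)
      fix x assume x: "x \<in> Pi\<^sub>E {1..n} X"
      show "lcl Y (f x \<inter> (U - f (x(k := zero k)))) \<in> Y"
        using lcl_in[OF assms(1)] YU assms(3) x by blast
    qed
    have "\<phi> k (zero k) \<subseteq> {}" unfolding \<phi>_def Phi_minus_def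
    proof (rule Union_least)
      fix S assume "S \<in> {lcl Y (f x \<inter> (U - f (x(k := zero k)))) |x. x \<in> Pi\<^sub>E {1..n} X \<and> x k = zero k}"
      then obtain x where xa: "x k = zero k"
        and S: "S = lcl Y (f x \<inter> (U - f (x(k := zero k))))" by blast
      have "x(k := zero k) = x" using xa by auto
      then show "S \<subseteq> {}"
        unfolding S using assms(1) by (intro lcl_least) (auto simp: set_lattice_def)
    qed
    then show "\<phi> k (zero k) \<subseteq> \<phi> k a" by simp
    show "\<phi> k a \<subseteq> \<phi> k (one k)" unfolding \<phi>_def Phi_minus_def
    proof (rule Union_least)
      fix S assume "S \<in> {lcl Y (f x \<inter> (U - f (x(k := zero k)))) |x. x \<in> Pi\<^sub>E {1..n} X \<and> x k = a}"
      then obtain x where x: "x \<in> Pi\<^sub>E {1..n} X" and xa: "x k = a"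
        and S: "S = lcl Y (f x \<inter> (U - f (x(k := zero k))))" by blast
      let ?x = "x(k := one k)"
      have x1: "?x \<in> Pi\<^sub>E {1..n} X" using PE k x o by blast
      have "lcl Y (f x \<inter> (U - f (x(k := zero k)))) \<subseteq> lcl Y (f ?x \<inter> (U - f (?x(k := zero k))))"
        using bcf(2)[OF k x] by (intro lcl_mono) auto
      moreover have "lcl Y (f ?x \<inter> (U - f (?x(k := zero k)))) \<in>
         {lcl Y (f x \<inter> (U - f (x(k := zero k)))) |x. x \<in> Pi\<^sub>E {1..n} X \<and> x k = one k}"
        using x1 by (intro CollectI exI[of _ ?x]) simp
      ultimately show "S \<subseteq>
         \<Union> {lcl Y (f x \<inter> (U - f (x(k := zero k)))) |x. x \<in> Pi\<^sub>E {1..n} X \<and> x k = one k}"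
        unfolding S by blast
    qed
  qed
  define x0 where "x0 = restrict zero {1..n}"
  have x0: "x0 \<in> Pi\<^sub>E {1..n} X" unfolding x0_def using z by auto
  have ok: "lterm_ok n Y (build f zero one n x0)"
    using assms x0 by (intro build_ok) auto
  have ev: "f x = leval (build f zero one n x0) (\<lambda>k. \<phi> k (x k))" if x: "x \<in> Pi\<^sub>E {1..n} X" for x
  proof -
    have "build f zero one n x0 = build f zero one n x"
      using x x0 by (intro build_cong) (auto simp: PiE_def extensional_def)
    then show ?thesis using build_eval[where \<phi>=\<phi> and m=n and e=x and v="\<lambda>k. \<phi> k (x k)" and f=f and zero=zero and one=one and X=X and n=n] assms(2) D x by auto
  qed
  show "pseudo_polynomial n X zero one Y f"
    unfolding pseudo_polynomial_def using ok bnd ev by blast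
qed

end
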